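(* Let $p$ be a prime and let $L\in\mathbb{F}_p((X^{-1}))$ be irrational with continued fraction expansion $L=[A_0;A_1,A_2,\ldots]$ such that $K(L):=\sup_{d\ge1}\deg(A_d)<\infty$. Let $B\in\mathbb{F}_p[X]$ be nonzero with $\deg B=e$. Then the digital Kronecker sequence associated with $BL$ is a $(t,1)$-sequence in base $p$ with $t=K(L)+e-1$.
   Context: Elements of $\mathbb{F}_p$ are identified with $\{0,\ldots,p-1\}$. For $n=n_0+n_1p+\cdots$ in base $p$, $n(X)=n_0+n_1X+\cdots$. For $M=\sum_{i=w}^\infty a_iX^{-i}$, $\{M\}=\sum_{i\ge\max(1,w)}a_iX^{-i}$. The digital Kronecker sequence associated with $M$: writing $\{n(X)M\}=\sum_{i\ge1}c_iX^{-i}$, $x_n=\sum_{i\ge1}c_ip^{-i}$. Every irrational $L$ has a unique infinite continued fraction expansion $[A_0;A_1,\ldots]$ with $A_i\in\mathbb{F}_p[X]$, $\deg A_i\ge1$ for $i\ge1$. A $(t,m,1)$-net in base $p$ is a set of $p^m$ points in $[0,1)$ such that every interval $[a/p^{m-t},(a+1)/p^{m-t})$, $0\le a<p^{m-t}$, contains exactly $p^t$ points; a sequence $(x_n)_{n\ge0}$ in $[0,1)$ is a $(t,1)$-sequence in base $p$ if for all integers $m>t$ and $k\ge0$ the points $x_{kp^m},\ldots,x_{(k+1)p^m-1}$ form a $(t,m,1)$-net in base $p$. *)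

theory Defs
  imports "HOL-Analysis.Analysis" "HOL-Computational_Algebra.Computational_Algebra"
begin

text \<open>The field F_p is modelled by a finite field type 'a with CARD('a) = p, p prime.
  The Laurent series field F_p((X^{-1})) is modelled by the library type 'a fls, whose formal
  variable T stands for X^{-1}; thus M = sum_{i>=w} a_i X^{-i} is the fls with coefficient
  fls_nth M i = a_i.  A polynomial B(X) = sum_j b_j X^j embeds as the fls with coefficient b_j at index -j.\<close>

definition poly_fls :: "'a::zero poly \<Rightarrow> 'a fls" where
  "poly_fls B = Abs_fls (\<lambda>i. if i \<le> 0 then coeff B (nat (- i)) else 0)"

definition fls_frac :: "'a::zero fls \<Rightarrow> 'a fls" where
  "fls_frac M = Abs_fls (\<lambda>i. if 1 \<le> i then fls_nth M i else 0)"

definition fls_polypart :: "'a::zero fls \<Rightarrow> 'a poly" where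
  "fls_polypart M = Abs_poly (\<lambda>j. fls_nth M (- int j))"

definition fls_irrational :: "'a::field fls \<Rightarrow> bool" where
  "fls_irrational L \<longleftrightarrow> \<not> (\<exists>P Q. Q \<noteq> 0 \<and> L = poly_fls P / poly_fls Q)"

fun cf_rem :: "'a::field fls \<Rightarrow> nat \<Rightarrow> 'a fls" where
  "cf_rem L 0 = L"
| "cf_rem L (Suc k) = inverse (fls_frac (cf_rem L k))"

definition cf_digit :: "'a::field fls \<Rightarrow> nat \<Rightarrow> 'a poly" where
  "cf_digit L k = fls_polypart (cf_rem L k)"

definition fp_val :: "'a::{field,finite} \<Rightarrow> nat" where
  "fp_val c = (THE k. k < CARD('a) \<and> of_nat k = c)"

definition nat_poly :: "nat \<Rightarrow> 'a::{field,finite} poly" where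
  "nat_poly n = Poly (map (\<lambda>j. of_nat (n div CARD('a) ^ j mod CARD('a))) [0..<Suc n])"

definition kronecker_seq :: "'a::{field,finite} fls \<Rightarrow> nat \<Rightarrow> real" where
  "kronecker_seq M n =
     (\<Sum>i. real (fp_val (fls_nth (fls_frac (poly_fls (nat_poly n) * M)) (int (Suc i))))
             / real CARD('a) ^ Suc i)"

text \<open>(t,m,1)-net in base b for the points x_k, k in {k0..<k0+b^m} (counted with multiplicity).\<close>
definition is_tm1_net :: "nat \<Rightarrow> nat \<Rightarrow> nat \<Rightarrow> (nat \<Rightarrow> real) \<Rightarrow> nat set \<Rightarrow> bool" where
  "is_tm1_net b t m x I \<longleftrightarrow>
     card I = b ^ m \<and> (\<forall>k\<in>I. 0 \<le> x k \<and> x k < 1) \<and>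
     (\<forall>a < b ^ (m - t). card {k \<in> I. real a / real b ^ (m - t) \<le> x k \<and>
                                          x k < (real a + 1) / real b ^ (m - t)} = b ^ t)"

definition is_t1_seq :: "nat \<Rightarrow> nat \<Rightarrow> (nat \<Rightarrow> real) \<Rightarrow> bool" where
  "is_t1_seq b t x \<longleftrightarrow>
     (\<forall>m k. t < m \<longrightarrow> is_tm1_net b t m x {k * b ^ m ..< (k + 1) * b ^ m})"

end

theory Submission imports "HOL-Number_Theory.Residues" Defs begin

lemma poly_fls_nth: "fls_nth (poly_fls B) n = (if n \<le> 0 then coeff B (nat (- n)) else 0)"
proof -
  have "\<forall>\<^sub>\<infinity>k. coeff B k = 0" by (rule MOST_coeff_eq_0)
  hence "\<forall>\<^sub>\<infinity>k::nat. (if - int k \<le> 0 then coeff B (nat (- (- int k))) else 0) = 0"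
    by simp
  thus ?thesis unfolding poly_fls_def by simp
qed

lemma fls_frac_nth: "fls_nth (fls_frac M) n = (if 1 \<le> n then fls_nth M n else 0)"
  unfolding fls_frac_def by (rule nth_Abs_fls_lower_bound[of 1]) auto

lemma coeff_fls_polypart: "coeff (fls_polypart M) j = fls_nth M (- int j)"
proof -
  have "\<forall>\<^sub>\<infinity>j. fls_nth M (- int j) = 0" by (rule MOST_fls_neg_nth_eq_0)
  thus ?thesis unfolding fls_polypart_def by (simp add: Abs_poly_inverse)
qed

lemma poly_fls_add: "poly_fls (P + Q) = poly_fls P + poly_fls Q"
  by (rule fls_eqI) (simp add: poly_fls_nth)

lemma poly_fls_uminus: "poly_fls (- P) = - poly_fls (P :: 'a::ring poly)"
  by (rule fls_eqI) (simp add: poly_fls_nth)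

lemma poly_fls_diff: "poly_fls (P - Q) = poly_fls P - poly_fls (Q :: 'a::ring poly)"
  by (rule fls_eqI) (simp add: poly_fls_nth)

lemma poly_fls_0 [simp]: "poly_fls 0 = 0"
  by (rule fls_eqI) (simp add: poly_fls_nth)

lemma poly_fls_smult: "poly_fls (smult a Q) = fls_const a * poly_fls (Q :: 'a::comm_ring_1 poly)"
  by (rule fls_eqI) (simp add: poly_fls_nth)

lemma poly_fls_pCons: "poly_fls (pCons a Q) = fls_const a + fls_X_inv * poly_fls (Q :: 'a::comm_ring_1 poly)"
proof (rule fls_eqI)
  fix n :: int
  show "fls_nth (poly_fls (pCons a Q)) n = fls_nth (fls_const a + fls_X_inv * poly_fls Q) n"
  proof (cases "n < 0")
    case True
    then have "nat (- n) = Suc (nat (- (n + 1)))" by simp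
    then show ?thesis using True by (simp add: poly_fls_nth fls_X_inv_times_conv_shift coeff_pCons)
  qed (auto simp: poly_fls_nth fls_X_inv_times_conv_shift coeff_pCons)
qed

lemma poly_fls_mult: "poly_fls (P * Q) = poly_fls P * poly_fls (Q :: 'a::comm_ring_1 poly)"
proof (induction P)
  case 0 then show ?case by simp
next
  case (pCons a P)
  have "pCons a P * Q = smult a Q + pCons 0 (P * Q)" by simp
  then have "poly_fls (pCons a P * Q) = fls_const a * poly_fls Q + fls_X_inv * (poly_fls P * poly_fls Q)"
    by (simp add: poly_fls_add poly_fls_smult poly_fls_pCons pCons.IH)
  also have "\<dots> = poly_fls (pCons a P) * poly_fls Q"
    by (simp add: poly_fls_pCons algebra_simps)
  finally show ?case .
qed

lemma poly_fls_eq_0_iff [simp]: "poly_fls P = 0 \<longleftrightarrow> P = 0"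
proof
  assume "poly_fls P = 0"
  then have "\<forall>j. coeff P j = 0"
    by (metis poly_fls_nth[of P "- int _"] fls_zero_nth  nat_int neg_0_le_iff_le of_nat_0_le_iff minus_minus)
  then show "P = 0" by (simp add: poly_eq_iff)
qed simp

lemma poly_fls_subdegree: "P \<noteq> 0 \<Longrightarrow> fls_subdegree (poly_fls P) = - int (degree P)"
  by (rule fls_subdegree_eqI) (auto simp: poly_fls_nth coeff_eq_0)

lemma fls_frac_add: "fls_frac (F + G) = fls_frac F + fls_frac G"
  by (rule fls_eqI) (simp add: fls_frac_nth)

lemma fls_frac_uminus: "fls_frac (- F) = - fls_frac (F :: 'a::ring fls)"
  by (rule fls_eqI) (simp add: fls_frac_nth)

lemma fls_frac_diff: "fls_frac (F - G) = fls_frac F - fls_frac (G :: 'a::ring fls)"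
  by (rule fls_eqI) (simp add: fls_frac_nth)

lemma fls_frac_const: "fls_frac (fls_const c * F) = fls_const c * fls_frac (F :: 'a::ring fls)"
  by (rule fls_eqI) (simp add: fls_frac_nth)

lemma fls_frac_poly [simp]: "fls_frac (poly_fls P) = 0"
  by (rule fls_eqI) (simp add: fls_frac_nth poly_fls_nth)

lemma fls_frac_0 [simp]: "fls_frac 0 = 0"
  by (rule fls_eqI) (simp add: fls_frac_nth)

lemma fls_decomp: "F = poly_fls (fls_polypart F) + fls_frac (F :: 'a::ring fls)"
  by (rule fls_eqI) (simp add: fls_frac_nth poly_fls_nth coeff_fls_polypart)

lemma fls_frac_mult_poly:
  "fls_frac (poly_fls P * F) = fls_frac (poly_fls P * fls_frac (F :: 'a::comm_ring_1 fls))"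
proof -
  have "poly_fls P * F = poly_fls (P * fls_polypart F) + poly_fls P * fls_frac F"
    by (subst fls_decomp[of F]) (simp add: poly_fls_mult algebra_simps)
  then show ?thesis by (simp add: fls_frac_add)
qed

lemma fls_frac_id: "1 \<le> fls_subdegree F \<or> F = 0 \<Longrightarrow> fls_frac F = F"
  by (rule fls_eqI) (auto simp: fls_frac_nth)

lemma fls_frac_eq_0: "fls_frac F = 0 \<Longrightarrow> F = poly_fls (fls_polypart (F :: 'a::ring fls))"
  using fls_decomp[of F] by simp

lemma fls_frac_subdegree: "fls_frac F \<noteq> 0 \<Longrightarrow> 1 \<le> fls_subdegree (fls_frac F)"
  by (rule fls_subdegree_geI) (auto simp: fls_frac_nth)

lemma poly_fls_monom1: "poly_fls (monom 1 a) = fls_shift (int a) (1 :: 'a::comm_ring_1 fls)"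
  by (rule fls_eqI) (auto simp: poly_fls_nth coeff_monom)

lemma poly_fls_monom_mult_nth:
  "fls_nth (poly_fls (monom 1 a) * F) n = fls_nth (F :: 'a::comm_ring_1 fls) (n + int a)"
  by (simp add: poly_fls_monom1 fls_shifted_times_simps fls_mult_one)

lemma cf_rem_shift: "cf_rem (cf_rem L j) d = cf_rem L (j + d)"
  by (induction d) auto

lemma cf_digit_shift: "cf_digit (inverse (fls_frac L)) d = cf_digit L (Suc d)"
  using cf_rem_shift[of L 1 d] by (simp add: cf_digit_def)

lemma polypart_degree:
  assumes "W \<noteq> 0" "fls_subdegree W \<le> 0"
  shows "degree (fls_polypart W) = nat (- fls_subdegree W)"
proof (rule antisym)
  show "degree (fls_polypart W) \<le> nat (- fls_subdegree W)"
  proof (rule degree_le, intro allI impI)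
    fix j assume "nat (- fls_subdegree W) < j"
    then have "- int j < fls_subdegree W" by linarith
    then show "coeff (fls_polypart W) j = 0" by (simp add: coeff_fls_polypart)
  qed
  show "nat (- fls_subdegree W) \<le> degree (fls_polypart W)"
    by (rule le_degree) (use assms in \<open>simp add: coeff_fls_polypart\<close>)
qed

lemma polypart_zero:
  assumes "1 \<le> fls_subdegree W"
  shows "fls_polypart W = 0"
proof -
  have "coeff (fls_polypart W) j = 0" for j
    using assms by (simp add: coeff_fls_polypart)
  then show ?thesis by (simp add: poly_eq_iff)
qed

lemma dioph:
  fixes L :: "'a::field fls" and K :: nat
  assumes "\<forall>d\<ge>1. degree (cf_digit L d) \<le> K" and "Q \<noteq> 0"
  shows "fls_subdegree (fls_frac (poly_fls Q * L)) \<le> int (degree Q) + int K"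
  using assms
proof (induction "degree Q" arbitrary: Q L rule: less_induct)
  case less
  define y where "y = fls_frac L"
  define f where "f = fls_frac (poly_fls Q * L)"
  have f_eq: "f = fls_frac (poly_fls Q * y)"
    unfolding f_def y_def by (rule fls_frac_mult_poly)
  show ?case
  proof (cases "y = 0")
    case True
    then show ?thesis using f_eq f_def by simp
  next
    case ynz: False
    define a where "a = fls_subdegree y"
    have a1: "1 \<le> a" unfolding a_def y_def using ynz y_def fls_frac_subdegree by blast
    define L1 where "L1 = inverse y"
    have L1nz: "L1 \<noteq> 0" using ynz by (simp add: L1_def)
    have sL1: "fls_subdegree L1 = - a" by (simp add: L1_def a_def)
    have "cf_digit L 1 = fls_polypart L1" by (simp add: cf_digit_def L1_def y_def)
    then have "degree (cf_digit L 1) = nat a"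
      using polypart_degree[OF L1nz] sL1 a1 by simp
    then have aK: "a \<le> int K" using less.prems(1) by force
    show ?thesis
    proof (cases "f = 0 \<or> fls_subdegree f \<le> a")
      case True
      then show ?thesis using aK f_def by auto
    next
      case False
      then have fnz: "f \<noteq> 0" and sfa: "a < fls_subdegree f" by auto
      define W where "W = poly_fls Q * y"
      define P where "P = fls_polypart W"
      have Wdec: "W = poly_fls P + f" using fls_decomp[of W] f_eq by (simp add: P_def W_def)
      have "poly_fls Q = W * L1" using ynz by (simp add: W_def L1_def)
      then have Qeq: "poly_fls Q = poly_fls P * L1 + f * L1" by (simp add: Wdec algebra_simps)
      have sfL1: "fls_subdegree (f * L1) = fls_subdegree f - a" using fnz L1nz sL1 by simp
      have fL1nz: "f * L1 \<noteq> 0" using fnz L1nz by simp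
      have "fls_frac (poly_fls P * L1) = fls_frac (poly_fls Q - f * L1)"
        using Qeq by (simp add: algebra_simps)
      also have "\<dots> = - (f * L1)"
        using fls_frac_id[of "f * L1"] sfL1 sfa by (simp add: fls_frac_diff)
      finally have fracP: "fls_frac (poly_fls P * L1) = - (f * L1)" .
      have Pnz: "P \<noteq> 0" using fracP fL1nz by auto
      have Qnz: "poly_fls Q \<noteq> 0" using less.prems(2) by simp
      have sW: "fls_subdegree W = - int (degree Q) + a"
        using Qnz ynz by (simp add: W_def poly_fls_subdegree less.prems(2) a_def)
      have Wnz: "W \<noteq> 0" using Qnz ynz W_def by simp
      have sW0: "fls_subdegree W \<le> 0"
      proof (rule ccontr)
        assume "\<not> fls_subdegree W \<le> 0"
        then have "P = 0" using polypart_zero[of W] P_def by simp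
        then show False using Pnz by simp
      qed
      have degP: "int (degree P) = int (degree Q) - a"
        using polypart_degree[OF Wnz sW0] sW sW0 P_def by simp
      have "degree P < degree Q" using degP a1 by linarith
      moreover have "\<forall>d\<ge>1. degree (cf_digit L1 d) \<le> K"
        using less.prems(1) by (simp add: L1_def y_def cf_digit_shift)
      ultimately have IH: "fls_subdegree (fls_frac (poly_fls P * L1)) \<le> int (degree P) + int K"
        using less.hyps Pnz by blast
      then have "fls_subdegree f - a \<le> int (degree Q) - a + int K"
        using fracP sfL1 degP by simp
      then show ?thesis using f_def by simp
    qed
  qed
qed

lemma CHAR_eq_CARD:
  assumes "prime CARD('a::{field,finite})"
  shows "CHAR('a) = CARD('a)"
proof -
  have "CHAR('a) dvd CARD('a)" by (rule CHAR_dvd_CARD)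
  moreover have "CHAR('a) \<noteq> Suc 0" by simp
  ultimately show ?thesis using assms unfolding prime_nat_iff by (metis One_nat_def)
qed

lemma of_nat_inj_CARD:
  assumes "prime CARD('a::{field,finite})" "i < CARD('a)" "j < CARD('a)"
    and "(of_nat i :: 'a) = of_nat j"
  shows "i = j"
proof -
  have "[i = j] (mod CARD('a))"
    using assms(4) CHAR_eq_CARD[OF assms(1)] by (metis of_nat_eq_iff_cong_CHAR)
  then show ?thesis using assms(2,3) by (simp add: Cong.cong_def)
qed

lemma of_nat_surj_CARD:
  assumes "prime CARD('a::{field,finite})"
  shows "\<exists>k < CARD('a). (of_nat k :: 'a) = c"
proof -
  have inj: "inj_on (of_nat :: nat \<Rightarrow> 'a) {..<CARD('a)}"
    by (intro inj_onI) (use of_nat_inj_CARD[OF assms] in auto)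
  have "card ((of_nat :: nat \<Rightarrow> 'a) ` {..<CARD('a)}) = CARD('a)"
    using card_image[OF inj] by simp
  then have "(of_nat :: nat \<Rightarrow> 'a) ` {..<CARD('a)} = UNIV"
    by (simp add: card_subset_eq)
  then show ?thesis by (metis UNIV_I imageE lessThan_iff)
qed

lemma fp_val:
  assumes "prime CARD('a::{field,finite})"
  shows "fp_val (c::'a) < CARD('a) \<and> of_nat (fp_val c) = c"
proof -
  have "\<exists>!k. k < CARD('a) \<and> (of_nat k :: 'a) = c"
    using of_nat_surj_CARD[OF assms] of_nat_inj_CARD[OF assms] by blast
  then show ?thesis unfolding fp_val_def by (rule theI')
qed

lemma fp_val_of_nat:
  assumes "prime CARD('a::{field,finite})" "k < CARD('a)"
  shows "fp_val (of_nat k :: 'a) = k"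
  using fp_val[OF assms(1), of "of_nat k"] of_nat_inj_CARD[OF assms(1)] assms(2) by metis

lemma fp_val_inj:
  assumes "prime CARD('a::{field,finite})" "fp_val (c::'a) = fp_val d"
  shows "c = d"
  using fp_val[OF assms(1), of c] fp_val[OF assms(1), of d] assms(2) by metis

lemma fp_val_minus1:
  assumes "prime CARD('a::{field,finite})" "fp_val (c::'a) = CARD('a) - 1"
  shows "c = -1"
proof -
  have "of_nat (CARD('a)) = (0::'a)"
    using CHAR_eq_CARD[OF assms(1)] by (metis of_nat_CHAR)
  moreover have "CARD('a) = Suc (CARD('a) - 1)" using assms(1) prime_gt_0_nat by simp
  ultimately have "(of_nat (CARD('a) - 1) :: 'a) + 1 = 0"
    by (metis of_nat_Suc add.commute)
  then have "(of_nat (CARD('a) - 1) :: 'a) = -1" by (simp add: eq_neg_iff_add_eq_0)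
  then show ?thesis using fp_val[OF assms(1), of c] assms(2) by simp
qed

lemma pow_gt_self: "2 \<le> (b::nat) \<Longrightarrow> j < b ^ j"
proof -
  assume "2 \<le> b"
  then have "(2::nat) ^ j \<le> b ^ j" by (rule power_mono) simp
  moreover have "j < 2 ^ j" by (rule less_exp)
  ultimately show ?thesis by linarith
qed

lemma coeff_nat_poly:
  assumes "2 \<le> CARD('a::{field,finite})"
  shows "coeff (nat_poly n :: 'a poly) j = of_nat (n div CARD('a) ^ j mod CARD('a))"
proof (cases "j < Suc n")
  case True
  then show ?thesis by (simp del: upt_Suc add: nat_poly_def nth_default_def)
next
  case False
  then have "n < CARD('a) ^ j" using pow_gt_self[OF assms, of j] by simp
  then show ?thesis using False by (simp del: upt_Suc add: nat_poly_def nth_default_def)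
qed

lemma digits_eq_imp_eq:
  assumes "2 \<le> (b::nat)" "\<forall>j. n div b ^ j mod b = n' div b ^ j mod b"
  shows "n = n'"
  using assms(2)
proof (induction "n + n'" arbitrary: n n' rule: less_induct)
  case less
  show ?case
  proof (cases "n = 0 \<and> n' = 0")
    case True then show ?thesis by simp
  next
    case False
    have "\<forall>j. (n div b) div b ^ j mod b = (n' div b) div b ^ j mod b"
      using less.prems[rule_format, of "Suc _"] by (simp add: div_mult2_eq power_Suc)
    moreover have "n div b + n' div b < n + n'"
      using False assms(1) by (metis add_less_le_mono add_less_mono div_le_dividend div_less_dividend
          le_neq_implies_less less_add_same_cancel1 one_less_numeral_iff order_less_le_trans semiring_norm(76)
          add_cancel_left_left add_less_mono1 bot_nat_0.not_eq_extremum add_strict_increasing2 add_le_less_mono)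
    ultimately have "n div b = n' div b" using less.hyps by blast
    moreover have "n mod b = n' mod b" using less.prems[rule_format, of 0] by simp
    ultimately show ?thesis by (metis div_mult_mod_eq)
  qed
qed

definition PS :: "nat \<Rightarrow> 'a::zero poly set" where
  "PS m = {q. \<forall>j\<ge>m. coeff q j = 0}"

lemma prime_card_ge2: "prime CARD('a) \<Longrightarrow> 2 \<le> CARD('a)"
  using prime_ge_2_nat by blast

lemma nat_poly_inj:
  assumes "prime CARD('a::{field,finite})" "(nat_poly n :: 'a poly) = nat_poly n'"
  shows "n = n'"
proof (rule digits_eq_imp_eq[OF prime_card_ge2[OF assms(1)]], rule allI)
  fix j
  have "(of_nat (n div CARD('a) ^ j mod CARD('a)) :: 'a) = of_nat (n' div CARD('a) ^ j mod CARD('a))"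
    using arg_cong[OF assms(2), of "\<lambda>q. coeff q j"] coeff_nat_poly[OF prime_card_ge2[OF assms(1)]] by metis
  moreover have "CARD('a) > 0" using prime_card_ge2[OF assms(1)] by simp
  ultimately show "n div CARD('a) ^ j mod CARD('a) = n' div CARD('a) ^ j mod CARD('a)"
    using of_nat_inj_CARD[OF assms(1)] by simp
qed

lemma nat_poly_PS:
  assumes "prime CARD('a::{field,finite})" "r < CARD('a) ^ m"
  shows "(nat_poly r :: 'a poly) \<in> PS m"
proof -
  have "r div CARD('a) ^ j = 0" if "m \<le> j" for j
  proof -
    have "CARD('a) ^ m \<le> CARD('a) ^ j" using that prime_card_ge2[OF assms(1)] by (simp add: power_increasing)
    then show ?thesis using assms(2) by simp
  qed
  then show ?thesis unfolding PS_def using coeff_nat_poly[OF prime_card_ge2[OF assms(1)]] by simp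
qed

lemma nat_poly_split:
  assumes "prime CARD('a::{field,finite})" "r < CARD('a) ^ m"
  shows "(nat_poly (k * CARD('a) ^ m + r) :: 'a poly) = monom 1 m * nat_poly k + nat_poly r"
proof (rule poly_eqI)
  fix j
  let ?p = "CARD('a)"
  have p2: "2 \<le> ?p" by (rule prime_card_ge2[OF assms(1)])
  show "coeff (nat_poly (k * ?p ^ m + r) :: 'a poly) j = coeff (monom 1 m * nat_poly k + nat_poly r) j"
  proof (cases "j < m")
    case True
    have pm: "?p ^ m = ?p ^ j * ?p ^ (m - j)" using True by (simp flip: power_add)
    have e1: "k * ?p ^ m + r = r + (k * ?p ^ (m - j)) * ?p ^ j" by (simp add: pm ac_simps)
    have e2: "(r + (k * ?p ^ (m - j)) * ?p ^ j) div ?p ^ j = r div ?p ^ j + k * ?p ^ (m - j)"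
      using p2 div_mult_self1[of "?p ^ j" r "k * ?p ^ (m - j)"] by simp
    have "(k * ?p ^ m + r) div ?p ^ j = k * ?p ^ (m - j) + r div ?p ^ j"
      by (metis e1 e2 add.commute)
    moreover have "(k * ?p ^ (m - j) + r div ?p ^ j) mod ?p = r div ?p ^ j mod ?p"
    proof -
      have "?p dvd k * ?p ^ (m - j)" using True by (simp add: dvd_power)
      then show ?thesis by (metis mod_mult_self4 dvd_div_mult_self add.commute mult.commute)
    qed
    ultimately show ?thesis using True by (simp add: coeff_nat_poly[OF p2] coeff_monom_mult)
  next
    case False
    have pm: "?p ^ j = ?p ^ m * ?p ^ (j - m)" using False by (simp flip: power_add)
    have "r div ?p ^ j = 0"
    proof -
      have "?p ^ m \<le> ?p ^ j" using False p2 by (simp add: power_increasing)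
      then show ?thesis using assms(2) by simp
    qed
    moreover have "(k * ?p ^ m + r) div ?p ^ j = k div ?p ^ (j - m)"
    proof -
      have "(k * ?p ^ m + r) div ?p ^ m = k" using assms(2) p2 by simp
      then show ?thesis by (simp add: pm div_mult2_eq)
    qed
    ultimately show ?thesis using False by (simp add: coeff_nat_poly[OF p2] coeff_monom_mult)
  qed
qed

lemma PS_card_le: "finite (PS m :: 'a::{zero,finite} poly set) \<and> card (PS m :: 'a poly set) \<le> CARD('a) ^ m"
proof -
  have sub: "PS m \<subseteq> Poly ` {xs :: 'a list. set xs \<subseteq> UNIV \<and> length xs = m}"
  proof
    fix q :: "'a poly" assume q: "q \<in> PS m"
    have "q = Poly (map (coeff q) [0..<m])"
      using q by (intro poly_eqI) (auto simp: PS_def nth_default_def)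
    then show "q \<in> Poly ` {xs. set xs \<subseteq> UNIV \<and> length xs = m}" by force
  qed
  have fin: "finite {xs :: 'a list. set xs \<subseteq> UNIV \<and> length xs = m}"
    by (rule finite_lists_length_eq) simp
  have "card (PS m :: 'a poly set) \<le> card (Poly ` {xs :: 'a list. set xs \<subseteq> UNIV \<and> length xs = m})"
    by (rule card_mono[OF finite_imageI[OF fin] sub])
  also have "\<dots> \<le> card {xs :: 'a list. set xs \<subseteq> UNIV \<and> length xs = m}"
    by (rule card_image_le[OF fin])
  also have "\<dots> = CARD('a) ^ m" using card_lists_length_eq[of "UNIV::'a set" m] by simp
  finally show ?thesis using finite_subset[OF sub finite_imageI[OF fin]] by simp
qed

lemma nat_poly_image:
  assumes "prime CARD('a::{field,finite})"
  shows "(nat_poly ` {..<CARD('a) ^ m} :: 'a poly set) = PS m \<and> card (PS m :: 'a poly set) = CARD('a) ^ m"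
proof -
  have inj: "inj_on (nat_poly :: nat \<Rightarrow> 'a poly) {..<CARD('a) ^ m}"
    by (intro inj_onI) (use nat_poly_inj[OF assms] in blast)
  have sub: "(nat_poly ` {..<CARD('a) ^ m} :: 'a poly set) \<subseteq> PS m"
    using nat_poly_PS[OF assms] by auto
  have c: "card (nat_poly ` {..<CARD('a) ^ m} :: 'a poly set) = CARD('a) ^ m"
    using card_image[OF inj] by simp
  have eq: "(nat_poly ` {..<CARD('a) ^ m} :: 'a poly set) = PS m"
    using card_seteq[OF conjunct1[OF PS_card_le] sub] c PS_card_le[where 'a='a, of m] by simp
  show ?thesis using eq c by simp
qed

definition dig :: "'a::comm_ring_1 fls \<Rightarrow> 'a poly \<Rightarrow> nat \<Rightarrow> 'a" where
  "dig M P j = fls_nth (fls_frac (poly_fls P * M)) (int j)"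

lemma dig_add: "dig M (P + Q) j = dig M P j + dig M Q j"
  by (simp add: dig_def poly_fls_add distrib_right fls_frac_add)

lemma dig_diff: "dig M (P - Q) j = dig M P j - dig M Q j"
  by (simp add: dig_def poly_fls_diff left_diff_distrib fls_frac_diff)

lemma dig_smult: "dig M (smult c P) j = c * dig M P j"
  by (simp add: dig_def poly_fls_smult fls_frac_const mult.assoc)

lemma dig_0 [simp]: "dig M 0 j = 0"
  by (simp add: dig_def)

lemma dig_shift:
  assumes "1 \<le> j"
  shows "dig M (monom 1 a * P) j = dig M P (j + a)"
proof -
  have "fls_frac (poly_fls (monom 1 a * P) * M) = fls_frac (poly_fls (monom 1 a) * fls_frac (poly_fls P * M))"
    by (simp add: poly_fls_mult mult.assoc fls_frac_mult_poly[of "monom 1 a" "poly_fls P * M"])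
  then show ?thesis using assms
    by (simp add: dig_def fls_frac_nth poly_fls_monom_mult_nth)
qed

lemma PS_add: "P \<in> PS m \<Longrightarrow> Q \<in> PS m \<Longrightarrow> P + Q \<in> PS m"
  by (simp add: PS_def)
lemma PS_diff: "P \<in> PS m \<Longrightarrow> Q \<in> PS m \<Longrightarrow> P - (Q :: 'a::ab_group_add poly) \<in> PS m"
  by (simp add: PS_def)
lemma PS_smult: "P \<in> PS m \<Longrightarrow> smult c P \<in> PS m"
  by (simp add: PS_def)
lemma PS_0: "0 \<in> PS m"
  by (simp add: PS_def)

lemma triangular_surj:
  fixes M :: "'a::field fls"
  assumes "\<And>j. 1 \<le> j \<Longrightarrow> j \<le> u \<Longrightarrow> \<exists>q\<in>PS m. (\<forall>i. 1 \<le> i \<and> i < j \<longrightarrow> dig M q i = 0) \<and> dig M q j \<noteq> 0"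
    and "s \<le> u"
  shows "\<exists>r\<in>PS m. \<forall>i<s. dig M r (Suc i) = w i"
  using assms(2)
proof (induction s)
  case 0 then show ?case using PS_0 by blast
next
  case (Suc s)
  then obtain r where r: "r \<in> PS m" "\<forall>i<s. dig M r (Suc i) = w i" by auto
  obtain q where q: "q \<in> PS m" "\<forall>i. 1 \<le> i \<and> i < Suc s \<longrightarrow> dig M q i = 0" "dig M q (Suc s) \<noteq> 0"
    using assms(1)[of "Suc s"] Suc.prems by auto
  define c where "c = (w s - dig M r (Suc s)) / dig M q (Suc s)"
  define r' where "r' = r + smult c q"
  have "r' \<in> PS m" unfolding r'_def by (intro PS_add PS_smult r q)
  moreover have "\<forall>i<Suc s. dig M r' (Suc i) = w i"
  proof (intro allI impI)
    fix i assume "i < Suc s"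
    then consider "i < s" | "i = s" by linarith
    then show "dig M r' (Suc i) = w i"
    proof cases
      case 1 then show ?thesis using r q by (simp add: r'_def dig_add dig_smult)
    next
      case 2 then show ?thesis using q(3) by (simp add: r'_def dig_add dig_smult c_def)
    qed
  qed
  ultimately show ?case by blast
qed

lemma frac_nonzero:
  fixes L :: "'a::field fls"
  assumes "fls_irrational L" "B \<noteq> 0" "Q \<noteq> 0"
  shows "fls_frac (poly_fls Q * (poly_fls B * L)) \<noteq> 0"
proof
  assume h: "fls_frac (poly_fls Q * (poly_fls B * L)) = 0"
  define F where "F = poly_fls (Q * B) * L"
  have "F = poly_fls (fls_polypart F)"
    using fls_frac_eq_0[of F] h by (simp add: F_def poly_fls_mult mult.assoc)
  moreover have nz: "poly_fls (Q * B) \<noteq> 0" using assms by simp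
  ultimately have "L = poly_fls (fls_polypart F) / poly_fls (Q * B)"
    by (simp add: F_def field_simps)
  moreover have "Q * B \<noteq> 0" using assms by simp
  ultimately show False using assms(1) unfolding fls_irrational_def by blast
qed

lemma PS_degree: "q \<in> PS j \<Longrightarrow> 1 \<le> j \<Longrightarrow> degree q \<le> j - 1"
  by (rule degree_le) (auto simp: PS_def)

lemma pivot:
  fixes L :: "'a::{field,finite} fls"
  assumes pr: "prime CARD('a)" and irr: "fls_irrational L" and Bnz: "B \<noteq> 0"
    and Kb: "\<forall>d\<ge>1. degree (cf_digit L d) \<le> K" and tK: "K + degree B \<le> t + 1"
    and j: "1 \<le> j" "j \<le> u" and m: "m = u + t"
  shows "\<exists>q\<in>PS m. (\<forall>i. 1 \<le> i \<and> i < j \<longrightarrow> dig (poly_fls B * L) q i = 0) \<and> dig (poly_fls B * L) q j \<noteq> 0"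
proof -
  define M where "M = poly_fls B * L"
  define h where "h = (\<lambda>q. map (\<lambda>i. dig M q (Suc i)) [0..<j - 1])"
  have fin: "finite {xs :: 'a list. set xs \<subseteq> UNIV \<and> length xs = j - 1}"
    by (rule finite_lists_length_eq) simp
  have "h ` PS j \<subseteq> {xs :: 'a list. set xs \<subseteq> UNIV \<and> length xs = j - 1}"
    by (auto simp: h_def)
  then have "card (h ` PS j) \<le> CARD('a) ^ (j - 1)"
    using card_mono[OF fin] card_lists_length_eq[of "UNIV::'a set" "j - 1"] by fastforce
  also have "\<dots> < CARD('a) ^ j"
    using j prime_card_ge2[OF pr] by (intro power_strict_increasing) auto
  also have "\<dots> = card (PS j :: 'a poly set)" using nat_poly_image[OF pr, of j] by simp
  finally have "\<not> inj_on h (PS j)" using card_image by fastforce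
  then obtain q1 q2 where q12: "q1 \<in> PS j" "q2 \<in> PS j" "q1 \<noteq> q2" "h q1 = h q2"
    unfolding inj_on_def by blast
  define r0 where "r0 = q1 - q2"
  have r0nz: "r0 \<noteq> 0" using q12 by (simp add: r0_def)
  have r0PS: "r0 \<in> PS j" using q12 by (simp add: r0_def PS_diff)
  have degr0: "degree r0 \<le> j - 1" using PS_degree[OF r0PS j(1)] .
  have r0dig: "dig M r0 i = 0" if "1 \<le> i" "i < j" for i
  proof -
    have "dig M q1 (Suc (i - 1)) = dig M q2 (Suc (i - 1))"
      using arg_cong[OF q12(4), of "\<lambda>xs. xs ! (i - 1)"] that by (simp add: h_def)
    then show ?thesis using that by (simp add: r0_def dig_diff)
  qed
  define G where "G = fls_frac (poly_fls r0 * M)"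
  have Gnz: "G \<noteq> 0" unfolding G_def M_def by (rule frac_nonzero[OF irr Bnz r0nz])
  define s where "s = fls_subdegree G"
  have sj: "int j \<le> s" unfolding s_def
  proof (rule fls_subdegree_geI[OF Gnz])
    fix k :: int assume "k < int j"
    show "fls_nth G k = 0"
    proof (cases "1 \<le> k")
      case True
      then have "dig M r0 (nat k) = 0" using r0dig[of "nat k"] \<open>k < int j\<close> by simp
      then show ?thesis using True by (simp add: dig_def G_def)
    qed (simp add: G_def fls_frac_nth)
  qed
  have "s \<le> int (degree (r0 * B)) + int K"
    unfolding s_def G_def M_def using dioph[OF Kb, of "r0 * B"] r0nz Bnz
    by (simp add: poly_fls_mult mult.assoc)
  then have sle: "s \<le> int (degree r0) + int (degree B) + int K"
    using r0nz Bnz by (simp add: degree_mult_eq)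
  define a where "a = nat (s - int j)"
  define q where "q = monom 1 a * r0"
  have "q \<in> PS m"
    unfolding PS_def
  proof (intro CollectI allI impI)
    fix n assume "m \<le> n"
    have "int (degree r0) + int a < int m" using sle degr0 tK j m sj unfolding a_def by linarith
    then have "degree r0 + a < n" using \<open>m \<le> n\<close> by linarith
    then show "coeff q n = 0" unfolding q_def
      by (simp add: coeff_monom_mult coeff_eq_0)
  qed
  moreover have "dig M q i = 0" if "1 \<le> i" "i < j" for i
  proof -
    have "dig M q i = dig M r0 (i + a)" using that by (simp add: q_def dig_shift)
    also have "\<dots> = fls_nth G (int (i + a))" by (simp add: dig_def G_def)
    also have "\<dots> = 0" using that sj unfolding a_def s_def by (intro fls_eq0_below_subdegree) linarith
    finally show ?thesis .
  qed
  moreover have "dig M q j \<noteq> 0"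
  proof -
    have "dig M q j = dig M r0 (j + a)" using j by (simp add: q_def dig_shift)
    also have "\<dots> = fls_nth G (int (j + a))" by (simp add: dig_def G_def)
    also have "int (j + a) = fls_subdegree G" using sj unfolding a_def s_def by simp
    finally show ?thesis using Gnz by simp
  qed
  ultimately show ?thesis unfolding M_def by blast
qed

definition Fib :: "'a::comm_ring_1 fls \<Rightarrow> nat \<Rightarrow> nat \<Rightarrow> 'a poly \<Rightarrow> 'a list \<Rightarrow> 'a poly set" where
  "Fib M m u c w = {\<rho>\<in>PS m. \<forall>i<u. dig M (c + \<rho>) (Suc i) = w ! i}"

lemma fiber_card:
  fixes M :: "'a::{field,finite} fls"
  assumes pr: "prime CARD('a)"
    and surj: "\<And>w. \<exists>r\<in>PS m. \<forall>i<u. dig M r (Suc i) = w i"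
    and m: "m = u + t" and lw: "length w = u"
  shows "card (Fib M m u c w) = CARD('a) ^ t"
proof -
  define N where "N = card (Fib M m u 0 (replicate u 0))"
  have eqN: "card (Fib M m u c' w') = N" if "length w' = u" for c' w'
  proof -
    obtain \<rho>w where \<rho>w: "\<rho>w \<in> PS m" "\<forall>i<u. dig M \<rho>w (Suc i) = w' ! i - dig M c' (Suc i)"
      using surj[of "\<lambda>i. w' ! i - dig M c' (Suc i)"] by blast
    have "bij_betw (\<lambda>\<rho>. \<rho> + \<rho>w) (Fib M m u 0 (replicate u 0)) (Fib M m u c' w')"
    proof (rule bij_betw_byWitness[where f' = "\<lambda>\<rho>. \<rho> - \<rho>w"])
      show "\<forall>a\<in>Fib M m u 0 (replicate u 0). a + \<rho>w - \<rho>w = a" by simp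
      show "\<forall>a\<in>Fib M m u c' w'. a - \<rho>w + \<rho>w = a" by simp
      show "(\<lambda>\<rho>. \<rho> + \<rho>w) ` Fib M m u 0 (replicate u 0) \<subseteq> Fib M m u c' w'"
      proof
        fix x assume "x \<in> (\<lambda>\<rho>. \<rho> + \<rho>w) ` Fib M m u 0 (replicate u 0)"
        then obtain \<rho> where \<rho>: "\<rho> \<in> PS m" "\<forall>i<u. dig M \<rho> (Suc i) = 0" and x: "x = \<rho> + \<rho>w"
          by (auto simp: Fib_def)
        have "x \<in> PS m" using \<rho> \<rho>w x PS_add by blast
        moreover have "\<forall>i<u. dig M (c' + x) (Suc i) = w' ! i"
          using \<rho> \<rho>w x by (simp add: dig_add)
        ultimately show "x \<in> Fib M m u c' w'" by (simp add: Fib_def)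
      qed
      show "(\<lambda>\<rho>. \<rho> - \<rho>w) ` Fib M m u c' w' \<subseteq> Fib M m u 0 (replicate u 0)"
      proof
        fix x assume "x \<in> (\<lambda>\<rho>. \<rho> - \<rho>w) ` Fib M m u c' w'"
        then obtain \<rho> where \<rho>: "\<rho> \<in> PS m" "\<forall>i<u. dig M (c' + \<rho>) (Suc i) = w' ! i" and x: "x = \<rho> - \<rho>w"
          by (auto simp: Fib_def)
        have "x \<in> PS m" using \<rho> \<rho>w x PS_diff by blast
        moreover have "\<forall>i<u. dig M (0 + x) (Suc i) = replicate u 0 ! i"
        proof (intro allI impI)
          fix i assume i: "i < u"
          have e1: "dig M c' (Suc i) + dig M \<rho> (Suc i) = w' ! i" using \<rho>(2) i by (simp add: dig_add)
          have e2: "dig M \<rho>w (Suc i) = w' ! i - dig M c' (Suc i)" using \<rho>w(2) i by simp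
          have "dig M x (Suc i) = dig M \<rho> (Suc i) - dig M \<rho>w (Suc i)" by (simp add: x dig_diff)
          also have "\<dots> = 0" using e1 e2 by (metis add.commute add_diff_cancel diff_self)
          finally show "dig M (0 + x) (Suc i) = replicate u 0 ! i" using i by simp
        qed
        ultimately show "x \<in> Fib M m u 0 (replicate u 0)" by (simp add: Fib_def)
      qed
    qed
    then show ?thesis unfolding N_def by (simp add: bij_betw_same_card)
  qed
  define W where "W = {xs :: 'a list. set xs \<subseteq> UNIV \<and> length xs = u}"
  have finW: "finite W" unfolding W_def by (rule finite_lists_length_eq) simp
  have cW: "card W = CARD('a) ^ u" unfolding W_def using card_lists_length_eq[of "UNIV::'a set" u] by simp
  have finPS: "finite (PS m :: 'a poly set)" using PS_card_le by blast
  have cover: "PS m = (\<Union>w\<in>W. Fib M m u 0 w)"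
  proof
    show "PS m \<subseteq> (\<Union>w\<in>W. Fib M m u 0 w)"
    proof
      fix \<rho> :: "'a poly" assume "\<rho> \<in> PS m"
      then have "\<rho> \<in> Fib M m u 0 (map (\<lambda>i. dig M \<rho> (Suc i)) [0..<u])" by (simp add: Fib_def)
      moreover have "map (\<lambda>i. dig M \<rho> (Suc i)) [0..<u] \<in> W" by (simp add: W_def)
      ultimately show "\<rho> \<in> (\<Union>w\<in>W. Fib M m u 0 w)" by blast
    qed
  qed (auto simp: Fib_def)
  have "card (PS m :: 'a poly set) = (\<Sum>w\<in>W. card (Fib M m u 0 w))"
    unfolding cover
  proof (rule card_UN_disjoint[OF finW])
    show "\<forall>i\<in>W. finite (Fib M m u 0 i)" using finPS by (auto simp: Fib_def)
    show "\<forall>i\<in>W. \<forall>j\<in>W. i \<noteq> j \<longrightarrow> Fib M m u 0 i \<inter> Fib M m u 0 j = {}"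
    proof (intro ballI impI)
      fix w1 w2 assume "w1 \<in> W" "w2 \<in> W" "w1 \<noteq> w2"
      then obtain i where "i < u" "w1 ! i \<noteq> w2 ! i"
        unfolding W_def using nth_equalityI by force
      then show "Fib M m u 0 w1 \<inter> Fib M m u 0 w2 = {}" by (auto simp: Fib_def)
    qed
  qed
  also have "\<dots> = (\<Sum>w\<in>W. N)" by (intro sum.cong refl eqN) (simp add: W_def)
  also have "\<dots> = CARD('a) ^ u * N" using cW by simp
  finally have "CARD('a) ^ u * CARD('a) ^ t = CARD('a) ^ u * N"
    using nat_poly_image[OF pr, of m] m by (simp add: power_add)
  then have "N = CARD('a) ^ t" using prime_card_ge2[OF pr] by simp
  then show ?thesis using eqN[OF lw] by simp
qed

lemma base_exp:
  fixes f :: "nat \<Rightarrow> nat" and b :: nat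
  assumes b: "2 \<le> b" and fb: "\<And>i. f i \<le> b - 1" and nt: "\<And>N. \<exists>i\<ge>N. f i < b - 1"
  shows "floor ((\<Sum>i. real (f i) / real b ^ Suc i) * real b ^ u) = int (\<Sum>i<u. f i * b ^ (u - 1 - i))"
proof -
  define g where "g i = real (f i) / real b ^ Suc i" for i
  define c where "c = real (b - 1) / real b ^ Suc u"
  define h where "h n = c * (1 / real b) ^ n" for n
  have bpos: "real b > 0" "real b \<ge> 2" using b by auto
  have geo: "summable (\<lambda>n. (1 / real b) ^ n)" using bpos by (intro summable_geometric) simp
  have hsum: "summable h" unfolding h_def by (intro summable_mult geo)
  have hval: "h n = real (b - 1) / real b ^ Suc (n + u)" for n
    by (simp add: h_def c_def power_add field_simps power_one_over)
  have hs: "suminf h = 1 / real b ^ u"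
  proof -
    have "suminf h = c * (1 / (1 - 1 / real b))"
      unfolding h_def using bpos by (simp add: suminf_mult[OF geo] suminf_geometric)
    also have "\<dots> = 1 / real b ^ u"
      using b bpos unfolding c_def by (simp add: field_simps of_nat_diff)
    finally show ?thesis .
  qed
  have g_le: "g (n + u) \<le> h n" for n
    unfolding g_def hval using fb[of "n + u"] bpos
    by (intro divide_right_mono) (auto simp: of_nat_diff)
  have g_nn: "0 \<le> g n" for n by (simp add: g_def)
  have gsum_shift: "summable (\<lambda>n. g (n + u))"
    by (rule summable_comparison_test'[OF hsum]) (use g_le g_nn in auto)
  have gsum: "summable g" using gsum_shift by (simp add: summable_iff_shift)
  define T where "T = (\<Sum>n. g (n + u))"
  have split: "suminf g = T + (\<Sum>i<u. g i)" unfolding T_def by (rule suminf_split_initial_segment[OF gsum])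
  have T0: "0 \<le> T" unfolding T_def by (rule suminf_nonneg[OF gsum_shift]) (simp add: g_nn)
  have T1: "T < 1 / real b ^ u"
  proof -
    obtain i where i: "i \<ge> u" "f i < b - 1" using nt[of u] by blast
    have "0 < suminf (\<lambda>n. h n - g (n + u))"
    proof (subst suminf_pos_iff)
      show "summable (\<lambda>n. h n - g (n + u))" by (intro summable_diff hsum gsum_shift)
      show "0 \<le> h n - g (n + u)" for n using g_le[of n] by simp
      have "g ((i - u) + u) < h (i - u)"
        unfolding g_def hval using i bpos by (intro divide_strict_right_mono) (auto simp: of_nat_diff)
      then show "\<exists>n. 0 < h n - g (n + u)" by (intro exI[of _ "i - u"]) simp
    qed
    also have "suminf (\<lambda>n. h n - g (n + u)) = suminf h - T"
      unfolding T_def by (rule suminf_diff[OF hsum gsum_shift, symmetric])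
    finally show ?thesis using hs by simp
  qed
  have A: "(\<Sum>i<u. g i) * real b ^ u = real (\<Sum>i<u. f i * b ^ (u - 1 - i))"
  proof -
    have "g i * real b ^ u = real (f i * b ^ (u - 1 - i))" if "i < u" for i
    proof -
      have "u = Suc i + (u - 1 - i)" using that by simp
      then have "real b ^ u = real b ^ Suc i * real b ^ (u - 1 - i)"
        by (metis power_add)
      then show ?thesis using bpos by (simp add: g_def)
    qed
    then show ?thesis by (simp add: sum_distrib_right)
  qed
  have "suminf g * real b ^ u = real (\<Sum>i<u. f i * b ^ (u - 1 - i)) + T * real b ^ u"
    using split A by (simp add: distrib_right)
  moreover have "0 \<le> T * real b ^ u" "T * real b ^ u < 1"
    using T0 T1 bpos by (auto simp: field_simps)
  ultimately show ?thesis unfolding g_def by (intro floor_unique) auto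
qed

lemma digit_sum:
  assumes b: "2 \<le> (b::nat)" and c: "\<forall>j<u. c j < b"
  shows "(\<Sum>j<u. c j * b ^ j) < b ^ u \<and> (\<forall>i<u. (\<Sum>j<u. c j * b ^ j) div b ^ i mod b = c i)"
  using c
proof (induction u)
  case 0 then show ?case by simp
next
  case (Suc u)
  define S where "S = (\<Sum>j<u. c j * b ^ j)"
  have IH: "S < b ^ u" "\<forall>i<u. S div b ^ i mod b = c i" using Suc S_def by auto
  have cu: "c u < b" using Suc.prems by simp
  have eq: "(\<Sum>j<Suc u. c j * b ^ j) = S + c u * b ^ u" by (simp add: S_def)
  have "S + c u * b ^ u < b ^ u + c u * b ^ u" using IH(1) by simp
  also have "\<dots> = (c u + 1) * b ^ u" by simp
  also have "\<dots> \<le> b * b ^ u" using cu by (intro mult_right_mono) auto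
  finally have lt: "S + c u * b ^ u < b ^ Suc u" by simp
  have dg: "(S + c u * b ^ u) div b ^ i mod b = c i" if "i < Suc u" for i
  proof (cases "i < u")
    case True
    have e1: "S + c u * b ^ u = S + (c u * b ^ (u - i)) * b ^ i"
      using True by (simp add: mult.assoc flip: power_add)
    have "(S + (c u * b ^ (u - i)) * b ^ i) div b ^ i = c u * b ^ (u - i) + S div b ^ i"
      using b div_mult_self1[of "b ^ i" S "c u * b ^ (u - i)"] by simp
    moreover have "b dvd c u * b ^ (u - i)" using True by (simp add: dvd_power)
    ultimately have "(S + c u * b ^ u) div b ^ i mod b = S div b ^ i mod b"
      using e1 by (metis mod_mult_self4 dvd_div_mult_self add.commute mult.commute)
    then show ?thesis using IH(2) True by simp
  next
    case False
    then have "i = u" using that by simp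
    moreover have "(S + c u * b ^ u) div b ^ u = c u"
      using IH(1) b div_mult_self1[of "b ^ u" S "c u"] by simp
    ultimately show ?thesis using cu by simp
  qed
  show ?case using lt dg eq by simp
qed

lemma nat_poly_0 [simp]: "nat_poly 0 = 0"
  by (simp add: nat_poly_def)

lemma not_eventually_minus1:
  fixes L :: "'a::{field,finite} fls"
  assumes pr: "prime CARD('a)" and irr: "fls_irrational L" and Bnz: "B \<noteq> 0"
  shows "\<exists>i\<ge>N. dig (poly_fls B * L) (nat_poly n) (Suc i) \<noteq> -1"
proof (cases "n = 0")
  case True then show ?thesis by auto
next
  case False
  define M where "M = poly_fls B * L"
  define Q where "Q = (nat_poly n :: 'a poly)"
  have Qnz: "Q \<noteq> 0" using nat_poly_inj[OF pr, of n 0] False by (auto simp: Q_def)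
  show ?thesis
  proof (rule ccontr)
    assume "\<not> ?thesis"
    then have all: "\<forall>i\<ge>N. dig M Q (Suc i) = -1" by (simp add: M_def Q_def)
    define G where "G = fls_frac (poly_fls Q * M)"
    define R where "R = (monom 1 (N + 2) - monom 1 (N + 1) :: 'a poly)"
    have Rnz: "R \<noteq> 0"
    proof
      assume "R = 0"
      then have "coeff R (N + 2) = 0" by simp
      then show False by (simp add: R_def coeff_monom)
    qed
    have Gi: "fls_nth G (int j) = -1" if "j \<ge> N + 1" for j
    proof -
      have "j - 1 \<ge> N" using that by simp
      then have "dig M Q (Suc (j - 1)) = -1" using all by blast
      then show ?thesis using that by (simp add: dig_def G_def)
    qed
    have "fls_frac (poly_fls R * G) = 0"
    proof (rule fls_eqI)
      fix j :: int
      show "fls_nth (fls_frac (poly_fls R * G)) j = fls_nth 0 j"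
      proof (cases "1 \<le> j")
        case True
        have "fls_nth (poly_fls R * G) j = fls_nth G (j + int (N + 2)) - fls_nth G (j + int (N + 1))"
          by (simp add: R_def poly_fls_diff left_diff_distrib poly_fls_monom_mult_nth)
        also have "\<dots> = 0"
          using Gi[of "nat (j + int (N + 2))"] Gi[of "nat (j + int (N + 1))"] True by simp
        finally show ?thesis using True by (simp add: fls_frac_nth)
      qed (simp add: fls_frac_nth)
    qed
    then have "fls_frac (poly_fls (R * Q) * M) = 0"
      unfolding G_def by (simp add: poly_fls_mult mult.assoc fls_frac_mult_poly[of R "poly_fls Q * M"])
    moreover have "fls_frac (poly_fls (R * Q) * M) \<noteq> 0"
      unfolding M_def by (rule frac_nonzero[OF irr Bnz]) (use Rnz Qnz in simp)
    ultimately show False by simp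
  qed
qed

lemma main:
  fixes L :: "'a::{field,finite} fls" and B :: "'a poly"
  assumes pr: "prime CARD('a)" and irr: "fls_irrational L" and Bnz: "B \<noteq> 0"
    and Kb: "\<forall>d\<ge>1. degree (cf_digit L d) \<le> K" and tK: "K + degree B \<le> t + 1"
  shows "is_t1_seq CARD('a) t (kronecker_seq (poly_fls B * L))"
  unfolding is_t1_seq_def
proof (intro allI impI)
  fix m k :: nat assume tm: "t < m"
  define p where "p = CARD('a)"
  define u where "u = m - t"
  define M where "M = poly_fls B * L"
  define x where "x = kronecker_seq M"
  define I where "I = {k * p ^ m..<(k + 1) * p ^ m}"
  have m_eq: "m = u + t" using tm by (simp add: u_def)
  have p2: "2 \<le> p" using prime_card_ge2[OF pr] by (simp add: p_def)
  define fn where "fn n i = fp_val (dig M (nat_poly n) (Suc i))" for n i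
  have x_eq: "x n = (\<Sum>i. real (fn n i) / real p ^ Suc i)" for n
    by (simp add: x_def kronecker_seq_def fn_def dig_def p_def)
  have fn_le: "fn n i \<le> p - 1" for n i
    using fp_val[OF pr] unfolding fn_def p_def by (metis Suc_pred' less_Suc_eq_le zero_less_iff_neq_zero not_less0)
  have fn_nt: "\<exists>i\<ge>N. fn n i < p - 1" for n N
  proof -
    obtain i where i: "i \<ge> N" "dig M (nat_poly n) (Suc i) \<noteq> -1"
      using not_eventually_minus1[OF pr irr Bnz, of N n] by (auto simp: M_def)
    have "fn n i \<noteq> p - 1" using fp_val_minus1[OF pr] i(2) by (auto simp: fn_def p_def)
    then show ?thesis using fn_le[of n i] i(1) by (intro exI[of _ i]) simp
  qed
  have floor_x: "floor (x n * real p ^ v) = int (\<Sum>i<v. fn n i * p ^ (v - 1 - i))" for n v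
    unfolding x_eq by (rule base_exp[OF p2 fn_le fn_nt])
  have "is_tm1_net p t m x I" unfolding is_tm1_net_def
  proof (intro conjI)
  show "card I = p ^ m" using p2 by (simp add: I_def algebra_simps)
  show "\<forall>n\<in>I. 0 \<le> x n \<and> x n < 1"
  proof
    fix n assume "n \<in> I"
    have "floor (x n) = 0" using floor_x[of n 0] by simp
    then show "0 \<le> x n \<and> x n < 1" by linarith
  qed
  show "\<forall>a<p ^ (m - t). card {n \<in> I. real a / real p ^ (m - t) \<le> x n \<and> x n < (real a + 1) / real p ^ (m - t)} = p ^ t"
  proof (intro allI impI)
    fix a assume a: "a < p ^ (m - t)"
    define enc where "enc w = (\<Sum>j<u. fp_val (w ! (u - 1 - j) :: 'a) * p ^ j)" for w
    define dv where "dv n = map (\<lambda>i. dig M (nat_poly n) (Suc i)) [0..<u]" for n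
    define W where "W = {xs :: 'a list. set xs \<subseteq> UNIV \<and> length xs = u}"
    have finW: "finite W" unfolding W_def by (rule finite_lists_length_eq) simp
    have cW: "card W = p ^ u" unfolding W_def p_def using card_lists_length_eq[of "UNIV::'a set" u] by simp
    have encprops: "enc w < p ^ u \<and> (\<forall>i<u. enc w div p ^ (u - 1 - i) mod p = fp_val (w ! i))"
      if "length w = u" for w
    proof -
      have cb: "\<forall>j<u. fp_val (w ! (u - 1 - j)) < p" using fp_val[OF pr] by (simp add: p_def)
      note ds = digit_sum[OF p2 cb]
      have "enc w div p ^ (u - 1 - i) mod p = fp_val (w ! i)" if "i < u" for i
      proof -
        have "u - 1 - i < u" using that by simp
        then have "enc w div p ^ (u - 1 - i) mod p = fp_val (w ! (u - 1 - (u - 1 - i)))"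
          using ds unfolding enc_def by blast
        also have "u - 1 - (u - 1 - i) = i" using that by simp
        finally show ?thesis .
      qed
      then show ?thesis using ds unfolding enc_def by simp
    qed
    have enc_inj: "inj_on enc W"
    proof (rule inj_onI)
      fix w1 w2 assume w: "w1 \<in> W" "w2 \<in> W" "enc w1 = enc w2"
      have l: "length w1 = u" "length w2 = u" using w by (auto simp: W_def)
      show "w1 = w2"
      proof (rule nth_equalityI)
        show "length w1 = length w2" using l by simp
        fix i assume "i < length w1"
        then have "fp_val (w1 ! i) = fp_val (w2 ! i)"
          using encprops[OF l(1)] encprops[OF l(2)] w(3) l by metis
        then show "w1 ! i = w2 ! i" using fp_val_inj[OF pr] by blast
      qed
    qed
    have "enc ` W = {..<p ^ u}"
    proof (rule card_seteq)
      show "finite {..<p ^ u}" by simp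
      show "enc ` W \<subseteq> {..<p ^ u}" using encprops by (auto simp: W_def)
      show "card {..<p ^ u} \<le> card (enc ` W)" using card_image[OF enc_inj] cW by simp
    qed
    then obtain w where wW: "w \<in> W" and encw: "enc w = a" using a u_def by (metis imageE lessThan_iff)
    have lw: "length w = u" using wW by (simp add: W_def)
    have dvW: "dv n \<in> W" for n by (simp add: dv_def W_def)
    have floor_enc: "floor (x n * real p ^ u) = int (enc (dv n))" for n
    proof -
      have "(\<Sum>i<u. fn n i * p ^ (u - 1 - i)) = (\<Sum>i<u. fn n (u - Suc i) * p ^ (u - 1 - (u - Suc i)))"
        by (rule sum.nat_diff_reindex[symmetric])
      also have "\<dots> = enc (dv n)" unfolding enc_def dv_def fn_def
      proof (intro sum.cong refl)
        fix i assume "i \<in> {..<u}"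
        then have h1: "u - Suc i = u - 1 - i" "u - 1 - (u - 1 - i) = i" "u - 1 - i < u - 0" by auto
        show "fp_val (dig M (nat_poly n) (Suc (u - Suc i))) * p ^ (u - 1 - (u - Suc i)) =
              fp_val (map (\<lambda>i. dig M (nat_poly n) (Suc i)) [0..<u] ! (u - 1 - i)) * p ^ i"
          by (simp only: h1 nth_map_upt[OF h1(3)] add_0_left)
      qed
      finally show ?thesis using floor_x[of n u] by simp
    qed
    have set1: "{n \<in> I. real a / real p ^ (m - t) \<le> x n \<and> x n < (real a + 1) / real p ^ (m - t)}
               = {n \<in> I. dv n = w}"
    proof -
      have "(real a / real p ^ u \<le> x n \<and> x n < (real a + 1) / real p ^ u) \<longleftrightarrow> dv n = w" for n
      proof -
        have pp: "real p ^ u > 0" using p2 by simp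
        have "(real a / real p ^ u \<le> x n \<and> x n < (real a + 1) / real p ^ u) \<longleftrightarrow>
              (real a \<le> x n * real p ^ u \<and> x n * real p ^ u < real a + 1)"
          using pp by (simp add: divide_le_eq less_divide_eq)
        also have "\<dots> \<longleftrightarrow> floor (x n * real p ^ u) = int a" by (simp add: floor_eq_iff)
        also have "\<dots> \<longleftrightarrow> enc (dv n) = enc w" using floor_enc encw by simp
        also have "\<dots> \<longleftrightarrow> dv n = w" using enc_inj dvW wW by (meson inj_on_eq_iff)
        finally show ?thesis .
      qed
      then show ?thesis by (simp add: u_def)
    qed
    define Km where "Km = (monom 1 m * nat_poly k :: 'a poly)"
    define F where "F = Fib M m u Km w"
    have dv_iff: "dv (k * p ^ m + r) = w \<longleftrightarrow> nat_poly r \<in> F" if "r < p ^ m" for r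
    proof -
      have np: "(nat_poly (k * p ^ m + r) :: 'a poly) = Km + nat_poly r"
        using nat_poly_split[OF pr, of r m k] that by (simp add: Km_def p_def)
      have "dv (k * p ^ m + r) = w \<longleftrightarrow> (\<forall>i<u. dig M (Km + nat_poly r) (Suc i) = w ! i)"
        unfolding dv_def np using lw by (auto simp: list_eq_iff_nth_eq)
      moreover have "(nat_poly r :: 'a poly) \<in> PS m" using nat_poly_PS[OF pr, of r m] that unfolding p_def by blast
      ultimately show ?thesis by (simp add: F_def Fib_def)
    qed
    have set2: "{n \<in> I. dv n = w} = (\<lambda>r. k * p ^ m + r) ` {r \<in> {..<p ^ m}. nat_poly r \<in> F}"
    proof
      show "{n \<in> I. dv n = w} \<subseteq> (\<lambda>r. k * p ^ m + r) ` {r \<in> {..<p ^ m}. nat_poly r \<in> F}"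
      proof
        fix n assume n: "n \<in> {n \<in> I. dv n = w}"
        define r where "r = n - k * p ^ m"
        have r: "r < p ^ m" "n = k * p ^ m + r" using n by (auto simp: I_def r_def algebra_simps)
        then show "n \<in> (\<lambda>r. k * p ^ m + r) ` {r \<in> {..<p ^ m}. nat_poly r \<in> F}"
          using dv_iff[OF r(1)] n by auto
      qed
      show "(\<lambda>r. k * p ^ m + r) ` {r \<in> {..<p ^ m}. nat_poly r \<in> F} \<subseteq> {n \<in> I. dv n = w}"
        using dv_iff by (auto simp: I_def algebra_simps)
    qed
    have FPS: "F \<subseteq> PS m" by (auto simp: F_def Fib_def)
    have injnp: "inj_on (nat_poly :: nat \<Rightarrow> 'a poly) {..<p ^ m}"
      by (intro inj_onI) (use nat_poly_inj[OF pr] in blast)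
    have imgF: "(nat_poly :: nat \<Rightarrow> 'a poly) ` {r \<in> {..<p ^ m}. nat_poly r \<in> F} = F"
    proof -
      have "(nat_poly :: nat \<Rightarrow> 'a poly) ` {..<p ^ m} = PS m" using nat_poly_image[OF pr] by (simp add: p_def)
      then show ?thesis using FPS by (auto simp: image_iff)
    qed
    have "card {n \<in> I. dv n = w} = card {r \<in> {..<p ^ m}. nat_poly r \<in> F}"
      unfolding set2 by (rule card_image) (simp add: inj_on_def)
    also have "\<dots> = card F"
      using card_image[OF inj_on_subset[OF injnp]] imgF by (metis (no_types, lifting) mem_Collect_eq subsetI)
    also have "\<dots> = p ^ t"
    proof -
      have surj: "\<exists>r\<in>PS m. \<forall>i<u. dig M r (Suc i) = w' i" for w'
        using triangular_surj[of u m M u w'] pivot[OF pr irr Bnz Kb tK _ _ m_eq] by (simp add: M_def)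
      show ?thesis unfolding F_def p_def by (rule fiber_card[OF pr surj m_eq lw])
    qed
    finally show "card {n \<in> I. real a / real p ^ (m - t) \<le> x n \<and> x n < (real a + 1) / real p ^ (m - t)} = p ^ t"
      using set1 by simp
  qed
  qed
  then show "is_tm1_net CARD('a) t m (kronecker_seq (poly_fls B * L)) {k * CARD('a) ^ m..<(k + 1) * CARD('a) ^ m}"
    by (simp add: p_def x_def M_def I_def)
qed

theorem proposition1:
  fixes L :: "'a::{field,finite} fls" and B :: "'a poly" and p :: nat
  assumes "CARD('a) = p" and "prime p"
    and "fls_irrational L"
    and "bdd_above ((\<lambda>d. degree (cf_digit L d)) ` {1..})"
    and "B \<noteq> 0"
  shows "is_t1_seq p (Sup ((\<lambda>d. degree (cf_digit L d)) ` {1..}) + degree B - 1)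
           (kronecker_seq (poly_fls B * L))"
proof -
  define K where "K = Sup ((\<lambda>d. degree (cf_digit L d)) ` {1..})"
  have Kb: "\<forall>d\<ge>1. degree (cf_digit L d) \<le> K"
    unfolding K_def using assms(4) by (auto intro: cSUP_upper)
  have "is_t1_seq CARD('a) (K + degree B - 1) (kronecker_seq (poly_fls B * L))"
    by (rule main[OF _ assms(3) assms(5) Kb]) (use assms(1,2) in auto)
  then show ?thesis using assms(1) by (simp add: K_def)
qed

end
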